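(* For every integer $n\geq 1$, $$\sum_{k=1}^{n}E_{2k-2}E_{2n-2k}=\frac2n\sum_{k=1}^{n}\frac{B_{2k}B_{2n-2k}}{k}\big(2^{2k}-1\big)2^{2k-1}\big(1-2^{2n-2k-1}\big)\binom{2n}{2k}.$$
   Context: $B_n$ denotes the Bernoulli numbers, defined by $\frac{x}{e^x-1}=\sum_{n\ge 0}B_n\frac{x^n}{n!}$ (so $B_0=1$). $E_n$ denotes the Euler numbers, defined by $\operatorname{sech} x=\sum_{n\ge0}E_n\frac{x^n}{n!}$ (so $E_0=1$, $E_2=-1$, $E_4=5,\dots$). *)

theory Defs
  imports "HOL-Computational_Algebra.Formal_Power_Series" Complex_Main
begin

definition bernoulli_num :: "nat \<Rightarrow> real" where
  "bernoulli_num n = fact n * fps_nth (fps_X / (fps_exp 1 - 1) :: real fps) n"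

definition euler_num :: "nat \<Rightarrow> real" where
  "euler_num n = fact n * fps_nth (inverse ((fps_exp 1 + fps_exp (-1)) / 2) :: real fps) n"

end

theory Submission
  imports Defs "HOL-Analysis.Analysis"
begin

no_notation vec_nth (infixl \<open>$\<close> 90)
notation fps_nth (infixl \<open>$\<close> 75)

lemma beta_int:
  "((\<lambda>u::real. u^p * (1-u)^q) has_integral (fact p * fact q / fact (p+q+1))) {0..1}"
proof -
  have "((\<lambda>t. t powr (real (p+1) - 1) * (1 - t) powr (real (q+1) - 1)) has_integral
          Beta (real (p+1)) (real (q+1))) {0..1}"
    by (rule has_integral_Beta_real) auto
  moreover have "Beta (real (p+1)) (real (q+1)) = fact p * fact q / fact (p+q+1)"
  proof -
    have "Gamma (real (p+1)) = fact p" using Gamma_fact[of p] by (simp add: add.commute)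
    moreover have "Gamma (real (q+1)) = fact q" using Gamma_fact[of q] by (simp add: add.commute)
    moreover have "Gamma (real (p+1) + real (q+1)) = fact (p+q+1)"
      using Gamma_fact[of "p+q+1"] by (simp add: add_ac)
    ultimately show ?thesis by (simp add: Beta_def)
  qed
  ultimately have "((\<lambda>t. t powr (real p) * (1 - t) powr (real q)) has_integral
          (fact p * fact q / fact (p+q+1))) {0..1}" by simp
  then have "((\<lambda>t. t powr (real p) * (1 - t) powr (real q)) has_integral
          (fact p * fact q / fact (p+q+1))) {0<..<1}" by (simp add: has_integral_Icc_iff_Ioo)
  then have "((\<lambda>u::real. u^p * (1-u)^q) has_integral (fact p * fact q / fact (p+q+1))) {0<..<1}"
    by (subst has_integral_spike_finite_eq[of "{}" _ "\<lambda>t. t powr (real p) * (1 - t) powr (real q)"])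
       (auto simp: powr_realpow)
  then show ?thesis by (simp add: has_integral_Icc_iff_Ioo)
qed

definition sc :: "real \<Rightarrow> real fps \<Rightarrow> real fps" where
  "sc u f = Abs_fps (\<lambda>n. u^n * f$n)"

lemma sc_nth [simp]: "sc u f $ n = u^n * f$n"
  by (simp add: sc_def)

lemma sc_mult: "sc u (f*g) = sc u f * sc u g"
proof (rule fps_ext)
  fix n
  have "sc u (f*g) $ n = (\<Sum>i=0..n. (u^i * f$i) * (u^(n-i) * g$(n-i)))"
    by (simp add: fps_mult_nth sum_distrib_left algebra_simps flip: power_add)
  then show "sc u (f*g) $ n = (sc u f * sc u g) $ n" by (simp add: fps_mult_nth)
qed

lemma sc_add: "sc u (f+g) = sc u f + sc u g"
  by (rule fps_ext) (simp add: algebra_simps)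

lemma sc_diff: "sc u (f-g) = sc u f - sc u g"
  by (rule fps_ext) (simp add: algebra_simps)

lemma sc_uminus: "sc u (-f) = - sc u f"
  by (rule fps_ext) (simp add: algebra_simps)

lemma sc_const: "sc u (fps_const c) = fps_const c"
  by (rule fps_ext) simp

lemma sc_one: "sc u 1 = 1"
  by (rule fps_ext) simp

lemma sc_X: "sc u fps_X = fps_const u * fps_X"
  apply (rule fps_ext)
  subgoal for n by (cases "n = 1") auto
  done

lemma sc_exp: "sc u (fps_exp a) = fps_exp (u*a)"
  by (rule fps_ext) (simp add: power_mult_distrib)

lemma sc_cmult: "sc u (fps_const c * f) = fps_const c * sc u f"
  by (rule fps_ext) (simp add: algebra_simps)

lemma sc_inverse: assumes "f$0 \<noteq> 0" shows "sc u (inverse f) = inverse (sc u f)"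
proof -
  have "sc u f * sc u (inverse f) = 1"
    using assms by (simp flip: sc_mult add: sc_one inverse_mult_eq_1')
  then show ?thesis by (simp add: fps_inverse_unique)
qed

lemma div2: "(f::real fps) / 2 = fps_const (1/2) * f"
proof -
  have "f / 2 = f * inverse 2" by (simp add: fps_divide_unit)
  moreover have "inverse (2::real fps) = fps_const (1/2)"
    by (rule fps_inverse_unique) (simp add: numeral_fps_const flip: fps_const_mult)
  ultimately show ?thesis by (simp add: mult.commute)
qed

abbreviation E :: "real \<Rightarrow> real fps" where "E a \<equiv> fps_exp a"

definition CC :: "real fps" where "CC = fps_const (1/2) * (E 1 + E (-1))"
definition SS :: "real fps" where "SS = fps_const (1/2) * (E 1 - E (-1))"
definition HH :: "real fps" where "HH = inverse CC"
definition TT :: "real fps" where "TT = SS * HH"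

lemma CC0: "CC $ 0 = 1" by (simp add: CC_def)

lemma sc_CC: "sc u CC = fps_const (1/2) * (E u + E (-u))"
  by (simp add: CC_def sc_cmult sc_add sc_exp)

lemma sc_SS: "sc u SS = fps_const (1/2) * (E u - E (-u))"
  by (simp add: SS_def sc_cmult sc_diff sc_exp)

lemma HH_CC: "sc u CC * sc u HH = 1"
  by (simp add: HH_def flip: sc_mult) (simp add: inverse_mult_eq_1' CC0 sc_one)

lemma exp_mult: "E a * E b = E (a+b)" by (simp add: fps_exp_add_mult)

lemma hh: "fps_const (1/2) * fps_const (1/2) * (2::real fps) = fps_const (1/2)"
  by (simp add: numeral_fps_const fps_const_mult)

lemma addition:
  assumes "a + b = 1"
  shows "sc a SS * sc b CC + sc b SS * sc a CC = SS"
proof -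
  have b: "b = 1 - a" using assms by simp
  have 1: "E a * E b = E 1" using b by (simp add: exp_mult)
  have 2: "E (-a) * E (-b) = E (-1)" using b by (simp add: exp_mult)
  have "sc a SS * sc b CC + sc b SS * sc a CC =
     (fps_const (1/2) * fps_const (1/2) * 2) * (E a * E b - E (-a) * E (-b))"
    by (simp add: sc_CC sc_SS algebra_simps)
  also have "\<dots> = SS" unfolding 1 2 SS_def hh ..
  finally show ?thesis .
qed

lemma key:
  assumes "a + b = 1"
  shows "sc a TT + sc b TT = SS * (sc a HH * sc b HH)"
proof -
  have ha: "sc a CC * sc a HH = 1" and hb: "sc b CC * sc b HH = 1" by (rule HH_CC)+
  have "sc a TT + sc b TT = sc a SS * sc a HH * (sc b CC * sc b HH) + sc b SS * sc b HH * (sc a CC * sc a HH)"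
    by (simp add: TT_def sc_mult ha hb)
  also have "\<dots> = (sc a SS * sc b CC + sc b SS * sc a CC) * (sc a HH * sc b HH)"
    by (simp add: algebra_simps)
  also have "\<dots> = SS * (sc a HH * sc b HH)" using addition[OF assms] by simp
  finally show ?thesis .
qed

definition PP :: "real fps" where
  "PP = Abs_fps (\<lambda>m. \<Sum>p=0..m. HH$p * HH$(m-p) * (fact p * fact (m-p) / fact (m+1)))"

lemma coeff_id:
  "(u^M + (1-u)^M) * TT$M =
     (\<Sum>i=0..M. SS$i * (\<Sum>p=0..M-i. HH$p*HH$(M-i-p) * (u^p*(1-u)^(M-i-p))))"
proof -
  have "(sc u TT + sc (1-u) TT) $ M = (SS * (sc u HH * sc (1-u) HH)) $ M"
    using key[of u "1-u"] by simp
  then show ?thesis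
    by (simp add: fps_mult_nth algebra_simps sum_distrib_left)
qed

lemma SP: "(SS * PP) $ M = 2 * TT$M / (M+1)"
proof -
  have i1: "((\<lambda>u::real. (u^M + (1-u)^M) * TT$M) has_integral (2 * TT$M / (M+1))) {0..1}"
  proof -
    have "((\<lambda>u::real. u^M * (1-u)^0 + u^0 * (1-u)^M) has_integral
        (fact M * fact 0 / fact (M+0+1) + fact 0 * fact M / fact (0+M+1))) {0..1}"
      by (intro has_integral_add beta_int)
    moreover have "fact M * fact 0 / fact (M+0+1) + fact 0 * fact M / fact (0+M+1) = (2::real) / (M+1)"
    proof -
      have f: "fact (M+1) = (real M + 1) * fact M" by (simp add: algebra_simps)
      have "fact M \<noteq> (0::real)" by simp
      then have e: "fact M / fact (M+1) = (1::real) / (real M + 1)" unfolding f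
        by (simp add: divide_simps)
      have "fact M * fact 0 / fact (M+0+1) + fact 0 * fact M / fact (0+M+1) =
            fact M / fact (M+1) + (fact M / fact (M+1) :: real)" by simp
      also have "\<dots> = 2 / (real M + 1)" unfolding e by (simp add: add_divide_distrib[symmetric])
      finally show ?thesis by simp
    qed
    ultimately have "((\<lambda>u::real. u^M + (1-u)^M) has_integral (2 / (M+1))) {0..1}" by simp
    from has_integral_mult_left[OF this, of "TT$M"] show ?thesis by (simp add: mult_ac)
  qed
  have i2: "((\<lambda>u::real. (\<Sum>i=0..M. SS$i * (\<Sum>p=0..M-i. HH$p*HH$(M-i-p) * (u^p*(1-u)^(M-i-p)))))
     has_integral (\<Sum>i=0..M. SS$i * (\<Sum>p=0..M-i. HH$p*HH$(M-i-p) *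
        (fact p * fact (M-i-p) / fact (p + (M-i-p) + 1))))) {0..1}"
    by (intro has_integral_sum has_integral_mult_right beta_int finite_atLeastAtMost)
  have eq: "(\<lambda>u::real. (u^M + (1-u)^M) * TT$M) = (\<lambda>u::real. (\<Sum>i=0..M. SS$i * (\<Sum>p=0..M-i. HH$p*HH$(M-i-p) * (u^p*(1-u)^(M-i-p)))))"
    using coeff_id by blast
  have "2 * TT$M / (M+1) = (\<Sum>i=0..M. SS$i * (\<Sum>p=0..M-i. HH$p*HH$(M-i-p) *
        (fact p * fact (M-i-p) / fact (p + (M-i-p) + 1))))"
    using has_integral_unique[OF i1[unfolded eq] i2] .
  also have "\<dots> = (SS * PP) $ M"
    unfolding fps_mult_nth
  proof (rule sum.cong[OF refl])
    fix i assume "i \<in> {0..M}"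
    have "(\<Sum>p=0..M-i. HH$p*HH$(M-i-p) * (fact p * fact (M-i-p) / fact (p + (M-i-p) + 1))) = PP$(M-i)"
      unfolding PP_def fps_nth_Abs_fps
    proof (rule sum.cong[OF refl])
      fix p assume "p \<in> {0..M-i}"
      then have "p + (M-i-p) + 1 = M - i + 1" by simp
      then show "HH$p*HH$(M-i-p) * (fact p * fact (M-i-p) / fact (p + (M-i-p) + 1)) =
                 HH$p*HH$(M-i-p) * (fact p * fact (M-i-p) / fact (M - i + 1))" by simp
    qed
    then show "SS$i * (\<Sum>p=0..M-i. HH$p*HH$(M-i-p) * (fact p * fact (M-i-p) / fact (p + (M-i-p) + 1))) = SS$i * PP$(M-i)"
      by simp
  qed
  finally show ?thesis by simp
qed

definition LL :: "real fps" where
  "LL = Abs_fps (\<lambda>j. if j = 0 then 0 else TT$(j-1) / j)"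

lemma XSP: "fps_X * (SS * PP) = fps_const 2 * LL"
proof (rule fps_ext)
  fix n
  show "(fps_X * (SS * PP)) $ n = (fps_const 2 * LL) $ n"
  proof (cases n)
    case 0 then show ?thesis by (simp add: LL_def)
  next
    case (Suc m) then show ?thesis by (simp add: LL_def SP)
  qed
qed

definition BB :: "real fps" where "BB = fps_X / (E 1 - 1)"

lemma BB_mul: "BB * (E 1 - 1) = fps_X"
proof -
  have s1: "subdegree (E 1 - 1) = 1" by (rule subdegreeI) auto
  have n1: "E 1 - 1 \<noteq> 0"
  proof
    assume "E 1 - 1 = 0"
    then have "(E 1 - 1) $ 1 = 0" by simp
    then show False by simp
  qed
  have "(E 1 - 1) dvd fps_X" using n1 s1 by (subst fps_dvd_iff) auto
  then show ?thesis unfolding BB_def by (rule dvd_div_mult_self)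
qed

lemma sc_BB: "sc u BB * (E u - 1) = fps_const u * fps_X"
proof -
  have "sc u (BB * (E 1 - 1)) = sc u fps_X" by (simp add: BB_mul)
  then show ?thesis by (simp add: sc_mult sc_diff sc_exp sc_one sc_X)
qed

lemma fps_nz: "f $ k \<noteq> 0 \<Longrightarrow> f \<noteq> 0" by auto

definition KK :: "real fps" where "KK = fps_const 2 * BB - sc 2 BB"

lemma ef: "E 1 * E (-1) = 1" by (simp add: exp_mult)
lemma ee: "E 1 * E 1 = E 2" by (simp add: exp_mult)
lemma ht: "fps_const (1/2) * fps_const 2 = (1::real fps)" by (simp add: fps_const_mult)

lemma KS: "KK * SS = fps_X"
proof -
  define e where "e = E 1"
  define f where "f = E (-1)"
  define h where "h = fps_const (1/2::real)"
  define t where "t = fps_const (2::real)"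
  have ef': "f * e = 1" using ef by (simp add: e_def f_def mult.commute)
  have ht': "h * t = 1" using ht by (simp add: h_def t_def)
  have b1: "BB * (e - 1) = fps_X" using BB_mul by (simp add: e_def)
  have b2: "sc 2 BB * (e * e - 1) = t * fps_X" using sc_BB[of 2] by (simp add: e_def t_def ee)
  have K': "KK = t * BB - sc 2 BB" by (simp add: KK_def t_def)
  have S': "SS = h * (e - f)" by (simp add: SS_def h_def e_def f_def)
  have "KK * SS * e = h * (t * BB * (e * e - f * e) - sc 2 BB * (e * e - f * e))"
    unfolding K' S' by (simp add: algebra_simps)
  also have "\<dots> = h * (t * (BB * (e - 1)) * (e + 1) - sc 2 BB * (e * e - 1))"
    unfolding ef' by (simp add: algebra_simps)
  also have "\<dots> = h * (t * fps_X * (e + 1) - t * fps_X)" unfolding b1 b2 ..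
  also have "\<dots> = (h * t) * fps_X * e" by (simp add: algebra_simps)
  also have "\<dots> = fps_X * e" by (simp add: ht')
  finally have "KK * SS * e = fps_X * e" .
  moreover have "e \<noteq> 0" by (rule fps_nz[of _ 0]) (simp add: e_def)
  ultimately show ?thesis by simp
qed

lemma CC_HH: "CC * HH = 1"
  by (simp add: HH_def inverse_mult_eq_1' CC0)

lemma XTT: "fps_X * TT = fps_X - (sc 2 BB - sc 4 BB)"
proof -
  define e where "e = E 1"
  define f where "f = E (-1)"
  define e2 where "e2 = E 2"
  define h where "h = fps_const (1/2::real)"
  define t where "t = fps_const (2::real)"
  have ef': "e * f = 1" using ef by (simp add: e_def f_def)
  have ee': "e * e = e2" using ee by (simp add: e_def e2_def)
  have e4: "e2 * e2 = E 4" by (simp add: e2_def exp_mult)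
  have ht': "h * t = 1" using ht by (simp add: h_def t_def)
  have t11: "t = 1 + 1" unfolding t_def by (metis fps_const_add fps_const_1_eq_1 one_add_one)
  have t4: "fps_const 4 = t + t" unfolding t_def by (simp flip: fps_const_add)
  have c: "e2 + 1 = t * e * CC"
  proof -
    have "t * e * CC = (h * t) * (e * e + e * f)" by (simp add: CC_def h_def e_def f_def algebra_simps)
    then show ?thesis by (simp add: ht' ee' ef')
  qed
  have a: "TT * (e2 + 1) = e2 - 1"
  proof -
    have "TT * (e2 + 1) = t * e * SS * (CC * HH)" unfolding TT_def c by (simp add: algebra_simps)
    also have "\<dots> = t * e * SS" by (simp add: CC_HH)
    also have "\<dots> = (h * t) * (e * e - e * f)" by (simp add: SS_def e_def f_def h_def algebra_simps)
    also have "\<dots> = e2 - 1" by (simp add: ht' ee' ef')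
    finally show ?thesis .
  qed
  have b2: "sc 2 BB * (e2 - 1) = t * fps_X" using sc_BB[of 2] by (simp add: e2_def t_def)
  have b4: "sc 4 BB * (e2 * e2 - 1) = fps_const 4 * fps_X" using sc_BB[of 4] by (simp add: e4)
  have nz1: "e2 - 1 \<noteq> 0" by (rule fps_nz[of _ 1]) (simp add: e2_def)
  have nz2: "e2 + 1 \<noteq> 0" by (rule fps_nz[of _ 0]) (simp add: e2_def)
  have "((sc 2 BB - sc 4 BB) * (e2 + 1)) * (e2 - 1) =
        sc 2 BB * (e2 - 1) * (e2 + 1) - sc 4 BB * (e2 * e2 - 1)" by (simp add: algebra_simps)
  also have "\<dots> = (t * fps_X) * (e2 + 1) - fps_const 4 * fps_X" by (simp only: b2 b4)
  also have "\<dots> = (t * fps_X) * (e2 - 1)" unfolding t4 by (simp add: algebra_simps)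
  finally have b: "(sc 2 BB - sc 4 BB) * (e2 + 1) = t * fps_X" using mult_right_cancel[OF nz1] by blast
  have "(fps_X * TT) * (e2 + 1) = fps_X * (e2 - 1)" by (simp add: a mult.assoc)
  also have "\<dots> = fps_X * (e2 + 1) - t * fps_X" by (simp add: t11 algebra_simps)
  also have "\<dots> = fps_X * (e2 + 1) - (sc 2 BB - sc 4 BB) * (e2 + 1)" unfolding b ..
  also have "\<dots> = (fps_X - (sc 2 BB - sc 4 BB)) * (e2 + 1)" by (simp add: algebra_simps)
  finally show ?thesis using mult_right_cancel[OF nz2] by blast
qed

lemma odd_zero: assumes "sc (-1) f = f" "odd m" shows "f $ m = 0"
proof -
  have "(sc (-1) f) $ m = f $ m" using assms(1) by simp
  then have "- f$m = f$m" using assms(2) by simp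
  then show ?thesis by simp
qed

lemma even_zero: assumes "sc (-1) f = - f" "even m" shows "f $ m = 0"
proof -
  have "(sc (-1) f) $ m = (- f) $ m" using assms(1) by simp
  then have "f$m = - f$m" using assms(2) by simp
  then show ?thesis by simp
qed

lemma scm_CC: "sc (-1) CC = CC" by (subst sc_CC) (simp add: CC_def add.commute)
lemma scm_SS: "sc (-1) SS = - SS" by (subst sc_SS) (simp add: SS_def algebra_simps)
lemma scm_HH: "sc (-1) HH = HH" by (simp add: HH_def sc_inverse CC0 scm_CC)
lemma scm_TT: "sc (-1) TT = - TT" by (simp add: TT_def sc_mult scm_SS scm_HH)

lemma scm_KK: "sc (-1) KK = KK"
proof -
  have "sc (-1) (KK * SS) = sc (-1) fps_X" by (simp add: KS)
  then have "sc (-1) KK * SS = fps_X" by (simp add: sc_mult scm_SS sc_X fps_const_neg[symmetric] del: fps_const_neg)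
  then have "sc (-1) KK * SS = KK * SS" by (simp add: KS)
  moreover have "SS \<noteq> 0" by (rule fps_nz[of _ 1]) (simp add: SS_def)
  ultimately show ?thesis by simp
qed

lemma HH_odd: "odd m \<Longrightarrow> HH $ m = 0" using odd_zero[OF scm_HH] .
lemma TT_even: "even m \<Longrightarrow> TT $ m = 0" using even_zero[OF scm_TT] .
lemma KK_odd: "odd m \<Longrightarrow> KK $ m = 0" using odd_zero[OF scm_KK] .

lemma TT_coeff: assumes "k \<ge> 1" shows "TT $ (2*k-1) = (4^(2*k) - 2^(2*k)) * BB $ (2*k)"
proof -
  have "(fps_X * TT) $ (2*k) = (fps_X - (sc 2 BB - sc 4 BB)) $ (2*k)" by (simp add: XTT)
  then show ?thesis using assms by (simp add: algebra_simps)
qed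

lemma KK_coeff: "KK $ m = (2 - 2^m) * BB $ m"
  by (simp add: KK_def algebra_simps)

lemma XXP: "fps_X * (fps_X * PP) = fps_const 2 * (LL * KK)"
proof -
  have "fps_X * (fps_X * PP) = KK * (fps_X * (SS * PP))" by (simp add: KS[symmetric] algebra_simps)
  also have "\<dots> = KK * (fps_const 2 * LL)" by (simp only: XSP)
  also have "\<dots> = fps_const 2 * (LL * KK)" by (simp add: algebra_simps)
  finally show ?thesis .
qed

lemma sum_split: fixes f :: "nat \<Rightarrow> real" and m :: nat shows "(\<Sum>i=0..2*m. f i) = (\<Sum>k=0..m. f (2*k)) + (\<Sum>k<m. f (2*k+1))"
proof (induction m)
  case 0 then show ?case by simp
next
  case (Suc m)
  have "(\<Sum>i=0..2*Suc m. f i) = (\<Sum>i=0..2*m. f i) + f (2*m+1) + f (2*m+2)"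
    by (simp add: algebra_simps)
  then show ?case using Suc by (simp add: algebra_simps)
qed

lemma sum_even: fixes f :: "nat \<Rightarrow> real" and m :: nat assumes "\<And>k. f (2*k+1) = 0" shows "(\<Sum>i=0..2*m. f i) = (\<Sum>k=0..m. f (2*k))"
  using sum_split[of f m] assms by simp

lemma arith_final:
  fixes F F1 F2 C A R b1 b2 :: real and n k :: nat
  assumes "n > 0" "k > 0" "F1 > 0" "F2 > 0" "C = 2 * real n * F / (F1 * F2)"
  shows "2 / real n * ((F1 * b1) * (F2 * b2) / real k * (A - 1) * (A / 2) * (1 - R / 2) * C)
       = F * 2 * ((A * A - A) * b1 / real (2 * k) * ((2 - R) * b2))"
  using assms(1-4) unfolding assms(5) by (simp add: field_simps)

theorem mainTheorem13:
  fixes n :: nat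
  assumes "n \<ge> 1"
  shows "(\<Sum>k=1..n. euler_num (2*k-2) * euler_num (2*n-2*k)) =
         2 / real n * (\<Sum>k=1..n. bernoulli_num (2*k) * bernoulli_num (2*n-2*k) / real k
            * (2 ^ (2*k) - 1) * 2 powi (int (2*k) - 1)
            * (1 - 2 powi (int (2*n-2*k) - 1)) * real (2*n choose 2*k))"
proof -
  obtain m where nm: "n = Suc m" using assms by (cases n) auto
  have HHdef: "inverse ((fps_exp 1 + fps_exp (-1)) / 2 :: real fps) = HH"
    by (simp add: HH_def CC_def div2)
  have eu: "euler_num j = fact j * HH$j" for j unfolding euler_num_def HHdef ..
  have bn: "bernoulli_num j = fact j * BB$j" for j by (simp add: bernoulli_num_def BB_def)
  have A: "PP $ (2*m) = 2 * (\<Sum>j=0..2*n. LL$j * KK$(2*n-j))"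
  proof -
    have "(fps_X * (fps_X * PP)) $ (2*n) = (fps_const 2 * (LL * KK)) $ (2*n)" by (simp add: XXP)
    moreover have "(fps_X * (fps_X * PP)) $ (2*n) = PP $ (2*m)" using nm by simp
    moreover have "(fps_const 2 * (LL * KK)) $ (2*n) = 2 * (LL * KK) $ (2*n)" by simp
    ultimately show ?thesis by (simp only: fps_mult_nth)
  qed
  have B: "(\<Sum>j=0..2*n. LL$j * KK$(2*n-j)) = (\<Sum>k=1..n. LL$(2*k) * KK$(2*n-2*k))"
  proof -
    have "(\<Sum>j=0..2*n. LL$j * KK$(2*n-j)) = (\<Sum>k=0..n. LL$(2*k) * KK$(2*n-2*k))"
      by (rule sum_even) (simp add: LL_def TT_even)
    also have "\<dots> = (\<Sum>k=1..n. LL$(2*k) * KK$(2*n-2*k))"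
      by (subst sum.atLeast_Suc_atMost) (auto simp: LL_def)
    finally show ?thesis .
  qed
  have C: "(\<Sum>k=1..n. euler_num (2*k-2) * euler_num (2*n-2*k)) = fact (2*m+1) * PP $ (2*m)"
  proof -
    have "(\<Sum>k=1..n. euler_num (2*k-2) * euler_num (2*n-2*k)) =
          (\<Sum>k=0..m. euler_num (2*k) * euler_num (2*m-2*k))"
      unfolding nm One_nat_def sum.shift_bounds_cl_Suc_ivl by simp
    also have "\<dots> = (\<Sum>k=0..m. fact (2*m+1) * (HH$(2*k) * HH$(2*m-2*k) * (fact (2*k) * fact (2*m-2*k) / fact (2*m+1))))"
      by (intro sum.cong refl) (simp add: eu)
    also have "\<dots> = fact (2*m+1) * (\<Sum>k=0..m. HH$(2*k) * HH$(2*m-2*k) * (fact (2*k) * fact (2*m-2*k) / fact (2*m+1)))"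
      by (simp add: sum_distrib_left)
    also have "(\<Sum>k=0..m. HH$(2*k) * HH$(2*m-2*k) * (fact (2*k) * fact (2*m-2*k) / fact (2*m+1))) = PP $ (2*m)"
      unfolding PP_def fps_nth_Abs_fps
      by (rule sum_even[symmetric]) (simp add: HH_odd)
    finally show ?thesis .
  qed
  have D: "2 / real n * (\<Sum>k=1..n. bernoulli_num (2*k) * bernoulli_num (2*n-2*k) / real k
            * (2 ^ (2*k) - 1) * 2 powi (int (2*k) - 1)
            * (1 - 2 powi (int (2*n-2*k) - 1)) * real (2*n choose 2*k))
        = fact (2*m+1) * 2 * (\<Sum>k=1..n. LL$(2*k) * KK$(2*n-2*k))"
    unfolding sum_distrib_left
  proof (rule sum.cong[OF refl])
    fix k assume k: "k \<in> {1..n}"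
    define A where "A = (2::real)^(2*k)"
    define R where "R = (2::real)^(2*n-2*k)"
    have pw: "(2::real) powi (int j - 1) = 2^j / 2" for j by (simp add: power_int_diff)
    have p1: "(2::real) powi (int (2*k) - 1) = A / 2"
      unfolding A_def by (rule pw)
    have p2: "(2::real) powi (int (2*n-2*k) - 1) = R / 2"
      unfolding R_def by (rule pw)
    have f4: "(4::real)^(2*k) = A * A" unfolding A_def by (simp flip: power_mult_distrib)
    have L: "LL$(2*k) = (A * A - A) * BB$(2*k) / real (2*k)"
      using k TT_coeff[of k] by (simp add: LL_def f4 A_def)
    have K: "KK$(2*n-2*k) = (2 - R) * BB$(2*n-2*k)" by (simp add: KK_coeff R_def)
    have Cb: "real (2*n choose 2*k) = 2 * real n * fact (2*m+1) / (fact (2*k) * fact (2*n-2*k))"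
    proof -
      have "real (2*n choose 2*k) = fact (2*n) / (fact (2*k) * fact (2*n-2*k))"
        using k by (intro binomial_fact) auto
      moreover have "(fact (2*n) :: real) = 2 * real n * fact (2*m+1)"
        using nm by (simp add: algebra_simps)
      ultimately show ?thesis by simp
    qed
    show "2 / real n * (bernoulli_num (2*k) * bernoulli_num (2*n-2*k) / real k
            * (2 ^ (2*k) - 1) * 2 powi (int (2*k) - 1)
            * (1 - 2 powi (int (2*n-2*k) - 1)) * real (2*n choose 2*k))
        = fact (2*m+1) * 2 * (LL$(2*k) * KK$(2*n-2*k))"
      unfolding L K p1 p2 bn
      apply (subst A_def[symmetric])
      using k by (intro arith_final Cb) auto
  qed
  show ?thesis unfolding C D A B by (simp add: mult.assoc)
qed

end
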